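(* Let $S$ be an idempotent semiring and define the relation $\sigma^*$ on $S$ by: $a\,\sigma^*\, b$ if and only if there exists $x\in S$ such that $axbxa=axbxa+a+axbxa$ and $bxaxb=bxaxb+b+bxaxb$. Then $\sigma^*$ is the least distributive lattice congruence on $S$.
   Context: An idempotent semiring is an algebra $(S,+,\cdot)$ with two binary operations such that $(S,+)$ and $(S,\cdot)$ are bands (associative, with $x+x=x$ and $xx=x$), and both distributive laws $x(y+z)=xy+xz$ and $(x+y)z=xz+yz$ hold; addition is not assumed commutative. A distributive lattice congruence on $S$ is a congruence $\rho$ such that $S/\rho$ is a distributive lattice, i.e. $S/\rho$ satisfies $x+y\approx y+x$, $xy\approx yx$ and $x+xy\approx x$. *)

theory Defs
  imports Main
begin

text \<open>An idempotent semiring on the whole type 'a, with addition pl and multiplication ml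
  (addition not assumed commutative).\<close>
definition idem_semiring :: "('a \<Rightarrow> 'a \<Rightarrow> 'a) \<Rightarrow> ('a \<Rightarrow> 'a \<Rightarrow> 'a) \<Rightarrow> bool" where
  "idem_semiring pl ml \<longleftrightarrow>
     (\<forall>x y z. pl (pl x y) z = pl x (pl y z)) \<and> (\<forall>x. pl x x = x) \<and>
     (\<forall>x y z. ml (ml x y) z = ml x (ml y z)) \<and> (\<forall>x. ml x x = x) \<and>
     (\<forall>x y z. ml x (pl y z) = pl (ml x y) (ml x z)) \<and>
     (\<forall>x y z. ml (pl x y) z = pl (ml x z) (ml y z))"

definition semiring_congruence :: "('a \<Rightarrow> 'a \<Rightarrow> 'a) \<Rightarrow> ('a \<Rightarrow> 'a \<Rightarrow> 'a) \<Rightarrow> 'a rel \<Rightarrow> bool" where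
  "semiring_congruence pl ml \<rho> \<longleftrightarrow> equiv UNIV \<rho> \<and>
     (\<forall>a b c d. (a, b) \<in> \<rho> \<and> (c, d) \<in> \<rho> \<longrightarrow> (pl a c, pl b d) \<in> \<rho> \<and> (ml a c, ml b d) \<in> \<rho>)"

definition dl_congruence :: "('a \<Rightarrow> 'a \<Rightarrow> 'a) \<Rightarrow> ('a \<Rightarrow> 'a \<Rightarrow> 'a) \<Rightarrow> 'a rel \<Rightarrow> bool" where
  "dl_congruence pl ml \<rho> \<longleftrightarrow> semiring_congruence pl ml \<rho> \<and>
     (\<forall>x y. (pl x y, pl y x) \<in> \<rho>) \<and> (\<forall>x y. (ml x y, ml y x) \<in> \<rho>) \<and>
     (\<forall>x y. (pl x (ml x y), x) \<in> \<rho>)"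

definition sigma_star :: "('a \<Rightarrow> 'a \<Rightarrow> 'a) \<Rightarrow> ('a \<Rightarrow> 'a \<Rightarrow> 'a) \<Rightarrow> 'a rel" where
  "sigma_star pl ml = {(a, b). \<exists>x.
     (let axbxa = ml (ml (ml (ml a x) b) x) a in axbxa = pl (pl axbxa a) axbxa) \<and>
     (let bxaxb = ml (ml (ml (ml b x) a) x) b in bxaxb = pl (pl bxaxb b) bxaxb)}"

end

theory Submission
  imports Defs
begin

declare [[smt_timeout=600]]

locale Tq =
  fixes C :: "'a \<Rightarrow> bool" and pl :: "'a \<Rightarrow> 'a \<Rightarrow> 'a" (infixl "\<oplus>" 65) and ml :: "'a \<Rightarrow> 'a \<Rightarrow> 'a" (infixl "\<cdot>" 70)
  assumes pa: "(x \<oplus> y) \<oplus> z = x \<oplus> (y \<oplus> z)" and pc: "x \<oplus> y = y \<oplus> x" and pi: "C x \<Longrightarrow> x \<oplus> x = x"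
  and ma: "(x \<cdot> y) \<cdot> z = x \<cdot> (y \<cdot> z)" and mi: "C x \<Longrightarrow> x \<cdot> x = x"
  and dl: "x \<cdot> (y \<oplus> z) = x \<cdot> y \<oplus> x \<cdot> z" and dr: "(x \<oplus> y) \<cdot> z = x \<cdot> z \<oplus> y \<cdot> z"
  and cp: "C (x \<oplus> y)" and cm: "C (x \<cdot> y)"
begin
definition leT where "leT p q \<longleftrightarrow> p \<oplus> q = q"
definition sigT where "sigT a b \<longleftrightarrow> C a \<and> C b \<and> (\<exists>x. C x \<and> leT a (a\<cdot>x\<cdot>b\<cdot>x\<cdot>a) \<and> leT b (b\<cdot>x\<cdot>a\<cdot>x\<cdot>b))"

lemma pcl: "x \<oplus> (y \<oplus> z) = y \<oplus> (x \<oplus> z)" by (metis pa pc)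
lemmas pac = pa pc pcl
lemma mi2: "C x \<Longrightarrow> x \<cdot> (x \<cdot> w) = x \<cdot> w" by (metis ma mi)

lemma leT_refl: "C p \<Longrightarrow> leT p p" by (simp add: leT_def pi)
lemma leT_trans[trans]: "leT p q \<Longrightarrow> leT q s \<Longrightarrow> leT p s" unfolding leT_def by (metis pa)
lemma leT_sum1: "C p \<Longrightarrow> leT p (p \<oplus> q)" unfolding leT_def by (metis pa pi)
lemma leT_sum2: "C q \<Longrightarrow> leT q (p \<oplus> q)" unfolding leT_def by (metis pa pc pi)
lemma leT_join: "leT p s \<Longrightarrow> leT q s \<Longrightarrow> leT (p \<oplus> q) s" unfolding leT_def by (metis pa)
lemma leT_ml: "leT p q \<Longrightarrow> leT (c \<cdot> p) (c \<cdot> q)" unfolding leT_def by (metis dl)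
lemma leT_mr: "leT p q \<Longrightarrow> leT (p \<cdot> c) (q \<cdot> c)" unfolding leT_def by (metis dr)
lemma leT_mult: "leT p q \<Longrightarrow> leT p' q' \<Longrightarrow> leT (p \<cdot> p') (q \<cdot> q')"
  by (meson leT_ml leT_mr leT_trans)
lemma leT_mid: "leT p q \<Longrightarrow> leT (u \<cdot> p \<cdot> v) (u \<cdot> q \<cdot> v)"
  by (simp add: leT_ml leT_mr)

lemma leT_prod5: "leT p1 q1 \<Longrightarrow> leT p2 q2 \<Longrightarrow> leT p3 q3 \<Longrightarrow> leT p4 q4 \<Longrightarrow> leT p5 q5 \<Longrightarrow>
   leT (p1\<cdot>p2\<cdot>p3\<cdot>p4\<cdot>p5) (q1\<cdot>q2\<cdot>q3\<cdot>q4\<cdot>q5)"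
  by (intro leT_mult)

lemma sigT_sym: "sigT a b \<Longrightarrow> sigT b a" unfolding sigT_def by blast

lemma sigT_refl: "C a \<Longrightarrow> sigT a a"
proof -
  assume a: "C a"
  have "a\<cdot>a\<cdot>a\<cdot>a\<cdot>a = a" using mi[OF a] by simp
  then show ?thesis unfolding sigT_def using a leT_refl[OF a] by metis
qed

lemma sigT_trans:
  assumes ab: "sigT a b" and bc: "sigT b c"
  shows "sigT a c"
proof -
  have Ca: "C a" and Cc: "C c" using ab bc sigT_def by auto
  obtain x where x: "C x" "leT a (a\<cdot>x\<cdot>b\<cdot>x\<cdot>a)" "leT b (b\<cdot>x\<cdot>a\<cdot>x\<cdot>b)" using ab sigT_def by blast
  obtain y where y: "C y" "leT b (b\<cdot>y\<cdot>c\<cdot>y\<cdot>b)" "leT c (c\<cdot>y\<cdot>b\<cdot>y\<cdot>c)" using bc sigT_def by blast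
  define z where "z = x\<cdot>b\<cdot>y \<oplus> y\<cdot>b\<cdot>x"
  have z1: "leT (x\<cdot>b\<cdot>y) z" unfolding z_def by (rule leT_sum1, rule cm)
  have z2: "leT (y\<cdot>b\<cdot>x) z" unfolding z_def by (rule leT_sum2, rule cm)
  have "leT (a\<cdot>x\<cdot>b\<cdot>x\<cdot>a) (a\<cdot>x\<cdot>(b\<cdot>y\<cdot>c\<cdot>y\<cdot>b)\<cdot>x\<cdot>a)"
    using leT_mid[OF y(2), of "a\<cdot>x" "x\<cdot>a"] by (simp add: ma)
  also have "a\<cdot>x\<cdot>(b\<cdot>y\<cdot>c\<cdot>y\<cdot>b)\<cdot>x\<cdot>a = a\<cdot>(x\<cdot>b\<cdot>y)\<cdot>c\<cdot>(y\<cdot>b\<cdot>x)\<cdot>a" by (simp add: ma)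
  finally have a1: "leT a (a\<cdot>(x\<cdot>b\<cdot>y)\<cdot>c\<cdot>(y\<cdot>b\<cdot>x)\<cdot>a)" using x(2) leT_trans by blast
  have "leT (c\<cdot>y\<cdot>b\<cdot>y\<cdot>c) (c\<cdot>y\<cdot>(b\<cdot>x\<cdot>a\<cdot>x\<cdot>b)\<cdot>y\<cdot>c)"
    using leT_mid[OF x(3), of "c\<cdot>y" "y\<cdot>c"] by (simp add: ma)
  also have "c\<cdot>y\<cdot>(b\<cdot>x\<cdot>a\<cdot>x\<cdot>b)\<cdot>y\<cdot>c = c\<cdot>(y\<cdot>b\<cdot>x)\<cdot>a\<cdot>(x\<cdot>b\<cdot>y)\<cdot>c" by (simp add: ma)
  finally have c1: "leT c (c\<cdot>(y\<cdot>b\<cdot>x)\<cdot>a\<cdot>(x\<cdot>b\<cdot>y)\<cdot>c)" using y(3) leT_trans by blast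
  have a2: "leT (a\<cdot>(x\<cdot>b\<cdot>y)\<cdot>c\<cdot>(y\<cdot>b\<cdot>x)\<cdot>a) (a\<cdot>z\<cdot>c\<cdot>z\<cdot>a)"
    by (rule leT_prod5; (rule leT_refl, fact)?; fact)
  have c2: "leT (c\<cdot>(y\<cdot>b\<cdot>x)\<cdot>a\<cdot>(x\<cdot>b\<cdot>y)\<cdot>c) (c\<cdot>z\<cdot>a\<cdot>z\<cdot>c)"
    by (rule leT_prod5; (rule leT_refl, fact)?; fact)
  have "C z" unfolding z_def by (rule cp)
  then show ?thesis unfolding sigT_def using a1 a2 c1 c2 leT_trans Ca Cc by blast
qed
lemma sigT_plus:
  assumes ab: "sigT a b" and c: "C c"
  shows "sigT (a \<oplus> c) (b \<oplus> c)"
proof -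
  have Ca: "C a" and Cb: "C b" using ab sigT_def by auto
  obtain x where x: "C x" "leT a (a\<cdot>x\<cdot>b\<cdot>x\<cdot>a)" "leT b (b\<cdot>x\<cdot>a\<cdot>x\<cdot>b)" using ab sigT_def by blast
  define z where "z = x \<oplus> c"
  have Cz: "C z" unfolding z_def by (rule cp)
  have xz: "leT x z" unfolding z_def by (rule leT_sum1[OF x(1)])
  have cz: "leT c z" unfolding z_def by (rule leT_sum2[OF c])
  have ac: "leT a (a \<oplus> c)" "leT c (a \<oplus> c)" by (rule leT_sum1[OF Ca], rule leT_sum2[OF c])
  have bc: "leT b (b \<oplus> c)" "leT c (b \<oplus> c)" by (rule leT_sum1[OF Cb], rule leT_sum2[OF c])
  have ccc: "c\<cdot>c\<cdot>c\<cdot>c\<cdot>c = c" using mi[OF c] by simp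
  have 1: "leT (a \<oplus> c) ((a \<oplus> c)\<cdot>z\<cdot>(b \<oplus> c)\<cdot>z\<cdot>(a \<oplus> c))"
  proof (rule leT_join)
    show "leT a ((a \<oplus> c)\<cdot>z\<cdot>(b \<oplus> c)\<cdot>z\<cdot>(a \<oplus> c))"
      by (rule leT_trans[OF x(2)], rule leT_prod5) (fact+)
    have "leT (c\<cdot>c\<cdot>c\<cdot>c\<cdot>c) ((a \<oplus> c)\<cdot>z\<cdot>(b \<oplus> c)\<cdot>z\<cdot>(a \<oplus> c))"
      by (rule leT_prod5) (fact+)
    then show "leT c ((a \<oplus> c)\<cdot>z\<cdot>(b \<oplus> c)\<cdot>z\<cdot>(a \<oplus> c))" using ccc by simp
  qed
  have 2: "leT (b \<oplus> c) ((b \<oplus> c)\<cdot>z\<cdot>(a \<oplus> c)\<cdot>z\<cdot>(b \<oplus> c))"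
  proof (rule leT_join)
    show "leT b ((b \<oplus> c)\<cdot>z\<cdot>(a \<oplus> c)\<cdot>z\<cdot>(b \<oplus> c))"
      by (rule leT_trans[OF x(3)], rule leT_prod5) (fact+)
    have "leT (c\<cdot>c\<cdot>c\<cdot>c\<cdot>c) ((b \<oplus> c)\<cdot>z\<cdot>(a \<oplus> c)\<cdot>z\<cdot>(b \<oplus> c))"
      by (rule leT_prod5) (fact+)
    then show "leT c ((b \<oplus> c)\<cdot>z\<cdot>(a \<oplus> c)\<cdot>z\<cdot>(b \<oplus> c))" using ccc by simp
  qed
  show ?thesis unfolding sigT_def using 1 2 Cz cp by blast
qed

lemma sigT_plus2:
  assumes ab: "sigT a b" and cd: "sigT c d"
  shows "sigT (a \<oplus> c) (b \<oplus> d)"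
proof -
  have "C c" "C b" using ab cd sigT_def by auto
  have "sigT (a \<oplus> c) (b \<oplus> c)" by (rule sigT_plus[OF ab \<open>C c\<close>])
  moreover have "sigT (c \<oplus> b) (d \<oplus> b)" by (rule sigT_plus[OF cd \<open>C b\<close>])
  moreover have "c \<oplus> b = b \<oplus> c" "d \<oplus> b = b \<oplus> d" by (rule pc)+
  ultimately show ?thesis using sigT_trans by simp
qed

lemma sigT_comm_plus: "sigT (x \<oplus> y) (y \<oplus> x)"
proof -
  have e: "y \<oplus> x = x \<oplus> y" by (rule pc)
  show ?thesis unfolding e by (rule sigT_refl, rule cp)
qed

lemma sigT_comm_mult: assumes x: "C x" and y: "C y" shows "sigT (x \<cdot> y) (y \<cdot> x)"
proof -
  have r1: "\<And>w. w\<cdot>x\<cdot>x = w\<cdot>x" "\<And>w. w\<cdot>y\<cdot>y = w\<cdot>y" using mi[OF x] mi[OF y] by (metis ma)+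
  have r2: "x\<cdot>y\<cdot>x\<cdot>y = x\<cdot>y" "\<And>w. w\<cdot>x\<cdot>y\<cdot>x\<cdot>y = w\<cdot>x\<cdot>y" using mi[OF cm[of x y]] by (metis ma)+
  have r3: "y\<cdot>x\<cdot>y\<cdot>x = y\<cdot>x" "\<And>w. w\<cdot>y\<cdot>x\<cdot>y\<cdot>x = w\<cdot>y\<cdot>x" using mi[OF cm[of y x]] by (metis ma)+
  note rr = r1 r2 r3 ma[symmetric]
  have e1: "x\<cdot>y\<cdot>(x\<cdot>y)\<cdot>(y\<cdot>x)\<cdot>(x\<cdot>y)\<cdot>(x\<cdot>y) = x\<cdot>y"
    by (simp only: rr)
  have e2: "y\<cdot>x\<cdot>(x\<cdot>y)\<cdot>(x\<cdot>y)\<cdot>(x\<cdot>y)\<cdot>(y\<cdot>x) = y\<cdot>x"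
    by (simp only: rr)
  show ?thesis unfolding sigT_def using e1 e2 leT_refl cm by metis
qed

lemma sigT_absorb: assumes x: "C x" and y: "C y" shows "sigT (x \<oplus> x \<cdot> y) x"
proof -
  let ?p = "x \<oplus> x \<cdot> y"
  have xx: "x\<cdot>x = x" by (rule mi[OF x])
  have xyxy: "x\<cdot>y\<cdot>(x\<cdot>y) = x\<cdot>y" by (rule mi, rule cm)
  have px: "?p\<cdot>x = x \<oplus> x\<cdot>y\<cdot>x" by (simp add: dr xx)
  have "?p\<cdot>x\<cdot>x\<cdot>x\<cdot>?p = ?p\<cdot>x\<cdot>?p" by (simp add: ma xx)
  also have "\<dots> = (x \<oplus> x\<cdot>y\<cdot>x)\<cdot>(x \<oplus> x \<cdot> y)" by (simp add: px)
  also have "\<dots> = x \<oplus> x\<cdot>y \<oplus> (x\<cdot>y\<cdot>x \<oplus> x\<cdot>y)"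
  proof -
    have h1: "x\<cdot>y\<cdot>x\<cdot>x = x\<cdot>y\<cdot>x" by (simp add: ma xx)
    have h2: "x\<cdot>(x\<cdot>y) = x\<cdot>y" by (simp add: ma[symmetric] xx)
    have h3: "x\<cdot>y\<cdot>x\<cdot>(x\<cdot>y) = x\<cdot>y" by (metis ma xx xyxy)
    show ?thesis by (simp add: dl dr xx h1 h2 h3 pac)
  qed
  also have "\<dots> = x \<oplus> x\<cdot>y \<oplus> x\<cdot>y\<cdot>x"
    using pi[OF cm[of x y]] by (metis pa pc)
  finally have e1: "?p\<cdot>x\<cdot>x\<cdot>x\<cdot>?p = x \<oplus> x\<cdot>y \<oplus> x\<cdot>y\<cdot>x" .
  have e2: "x\<cdot>x\<cdot>?p\<cdot>x\<cdot>x = x \<oplus> x\<cdot>y\<cdot>x"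
    by (simp add: dl dr xx ma mi2[OF x])
  have "leT ?p (?p \<oplus> x\<cdot>y\<cdot>x)" by (rule leT_sum1, rule cp)
  then have A: "leT ?p (?p\<cdot>x\<cdot>x\<cdot>x\<cdot>?p)" by (simp only: e1 pa)
  have "leT x (x \<oplus> x\<cdot>y\<cdot>x)" by (rule leT_sum1[OF x])
  then have B: "leT x (x\<cdot>x\<cdot>?p\<cdot>x\<cdot>x)" by (simp only: e2)
  show ?thesis unfolding sigT_def using A B x cp by blast
qed
lemma reg_le:
  assumes x: "C x" and y: "C y" and z: "C z"
  shows "leT (x\<cdot>y\<cdot>z\<cdot>x) (x\<cdot>y\<cdot>x\<cdot>z\<cdot>x)"
proof -
  let ?u = "x\<cdot>y\<cdot>z\<cdot>x" and ?v = "x\<cdot>y\<cdot>x\<cdot>z\<cdot>x" and ?P = "x\<cdot>(y \<oplus> z)\<cdot>x"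
  have yz: "y \<oplus> z = y \<oplus> y\<cdot>z \<oplus> z\<cdot>y \<oplus> z"
  proof -
    have "y \<oplus> z = (y \<oplus> z)\<cdot>(y \<oplus> z)" by (rule mi[symmetric], rule cp)
    also have "\<dots> = y\<cdot>y \<oplus> y\<cdot>z \<oplus> z\<cdot>y \<oplus> z\<cdot>z" by (simp add: dl dr pac)
    finally show ?thesis by (simp add: mi y z pac)
  qed
  have P1: "?P = x\<cdot>y\<cdot>x \<oplus> ?u \<oplus> x\<cdot>z\<cdot>y\<cdot>x \<oplus> x\<cdot>z\<cdot>x"
    by (subst yz) (simp add: dl dr ma)
  have uP: "leT ?u ?P"
  proof -
    have "leT ?u (x\<cdot>y\<cdot>x \<oplus> ?u)" by (rule leT_sum2, rule cm)
    also have "leT \<dots> (x\<cdot>y\<cdot>x \<oplus> ?u \<oplus> x\<cdot>z\<cdot>y\<cdot>x)" by (rule leT_sum1, rule cp)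
    also have "leT \<dots> (x\<cdot>y\<cdot>x \<oplus> ?u \<oplus> x\<cdot>z\<cdot>y\<cdot>x \<oplus> x\<cdot>z\<cdot>x)" by (rule leT_sum1, rule cp)
    finally show ?thesis by (simp only: P1)
  qed
  have PP: "?P = ?P\<cdot>?P" by (rule mi[symmetric], rule cm)
  have P2: "?P\<cdot>?P = x\<cdot>y\<cdot>x\<cdot>(x\<cdot>y\<cdot>x) \<oplus> x\<cdot>z\<cdot>x\<cdot>(x\<cdot>y\<cdot>x) \<oplus> (x\<cdot>y\<cdot>x\<cdot>(x\<cdot>z\<cdot>x) \<oplus> x\<cdot>z\<cdot>x\<cdot>(x\<cdot>z\<cdot>x))"
    by (simp only: dl dr ma[symmetric])
  have r1: "x\<cdot>x = x" "\<And>w. w\<cdot>x\<cdot>x = w\<cdot>x" using mi[OF x] by (simp, metis ma)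
  have r2: "x\<cdot>y\<cdot>x\<cdot>y = x\<cdot>y" "\<And>w. w\<cdot>x\<cdot>y\<cdot>x\<cdot>y = w\<cdot>x\<cdot>y" using mi[OF cm[of x y]] by (metis ma)+
  have r3: "x\<cdot>z\<cdot>x\<cdot>z = x\<cdot>z" "\<And>w. w\<cdot>x\<cdot>z\<cdot>x\<cdot>z = w\<cdot>x\<cdot>z" using mi[OF cm[of x z]] by (metis ma)+
  have r4: "z\<cdot>x\<cdot>z\<cdot>x = z\<cdot>x" "\<And>w. w\<cdot>z\<cdot>x\<cdot>z\<cdot>x = w\<cdot>z\<cdot>x" using mi[OF cm[of z x]] by (metis ma)+
  have r5: "x\<cdot>y\<cdot>x\<cdot>z\<cdot>x\<cdot>y\<cdot>x\<cdot>z = x\<cdot>y\<cdot>x\<cdot>z" using mi[OF cm[of "x\<cdot>y\<cdot>x" z]] by (simp add: ma)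
  note rr = r1 r2 r3 r4 r5 ma[symmetric]
  have u: "?u = x\<cdot>y\<cdot>?u\<cdot>(z\<cdot>x)" by (simp only: rr)
  have t1: "x\<cdot>y\<cdot>(x\<cdot>y\<cdot>x\<cdot>(x\<cdot>y\<cdot>x))\<cdot>(z\<cdot>x) = ?v" by (simp only: rr)
  have t2: "x\<cdot>y\<cdot>(x\<cdot>y\<cdot>x\<cdot>(x\<cdot>z\<cdot>x))\<cdot>(z\<cdot>x) = ?v" by (simp only: rr)
  have t3: "x\<cdot>y\<cdot>(x\<cdot>z\<cdot>x\<cdot>(x\<cdot>y\<cdot>x))\<cdot>(z\<cdot>x) = ?v" by (simp only: rr)
  have t4: "x\<cdot>y\<cdot>(x\<cdot>z\<cdot>x\<cdot>(x\<cdot>z\<cdot>x))\<cdot>(z\<cdot>x) = ?v" by (simp only: rr)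
  have "leT (x\<cdot>y\<cdot>?u\<cdot>(z\<cdot>x)) (x\<cdot>y\<cdot>(?P\<cdot>?P)\<cdot>(z\<cdot>x))"
    using leT_mid[OF uP] PP by metis
  also have "x\<cdot>y\<cdot>(?P\<cdot>?P)\<cdot>(z\<cdot>x) = ?v"
    unfolding P2 by (simp only: dl dr t1 t2 t3 t4 pi cm)
  finally show ?thesis using u by simp
qed
lemma K1: "C a \<Longrightarrow> C y \<Longrightarrow> C c \<Longrightarrow> a \<oplus> a\<cdot>y\<cdot>a = a\<cdot>y\<cdot>a \<Longrightarrow> c\<cdot>a \<oplus> c\<cdot>a\<cdot>y\<cdot>c\<cdot>a = c\<cdot>a\<cdot>y\<cdot>c\<cdot>a"
  using cm cp dl dr ma mi by (smt (verit))
lemma K1r: "C a \<Longrightarrow> C y \<Longrightarrow> C c \<Longrightarrow> a \<oplus> a\<cdot>y\<cdot>a = a\<cdot>y\<cdot>a \<Longrightarrow> a\<cdot>c \<oplus> a\<cdot>c\<cdot>y\<cdot>a\<cdot>c = a\<cdot>c\<cdot>y\<cdot>a\<cdot>c"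
  using cm cp dl dr ma mi by (smt (verit))
lemma sigT_multl:
  assumes ab: "sigT a b" and c: "C c"
  shows "sigT (c\<cdot>a) (c\<cdot>b)"
proof -
  obtain x where x: "C x" "leT a (a\<cdot>x\<cdot>b\<cdot>x\<cdot>a)" "leT b (b\<cdot>x\<cdot>a\<cdot>x\<cdot>b)" using ab sigT_def by blast
  have L: "leT (c\<cdot>a) (c\<cdot>a\<cdot>x\<cdot>(c\<cdot>b)\<cdot>x\<cdot>(c\<cdot>a))"
    if Ca: "C a" and Cb: "C b" and h: "leT a (a\<cdot>x\<cdot>b\<cdot>x\<cdot>a)" for a b
  proof -
    have h': "a \<oplus> a\<cdot>(x\<cdot>b\<cdot>x)\<cdot>a = a\<cdot>(x\<cdot>b\<cdot>x)\<cdot>a" using h unfolding leT_def by (simp add: ma)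
    from K1[OF Ca cm c h'] have "leT (c\<cdot>a) (c\<cdot>a\<cdot>(x\<cdot>b\<cdot>x)\<cdot>c\<cdot>a)" unfolding leT_def .
    also have "leT (c\<cdot>a\<cdot>(x\<cdot>b\<cdot>x)\<cdot>c\<cdot>a) (c\<cdot>a\<cdot>x\<cdot>(c\<cdot>b)\<cdot>x\<cdot>(c\<cdot>a))"
    proof -
      have "leT (c\<cdot>(a\<cdot>x)\<cdot>(b\<cdot>x)\<cdot>c) (c\<cdot>(a\<cdot>x)\<cdot>c\<cdot>(b\<cdot>x)\<cdot>c)" by (rule reg_le[OF c cm cm])
      then have "leT (c\<cdot>(a\<cdot>x)\<cdot>(b\<cdot>x)\<cdot>c\<cdot>a) (c\<cdot>(a\<cdot>x)\<cdot>c\<cdot>(b\<cdot>x)\<cdot>c\<cdot>a)" by (rule leT_mr)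
      then show ?thesis by (simp add: ma)
    qed
    finally show ?thesis .
  qed
  have "C a" "C b" using ab sigT_def by auto
  then show ?thesis unfolding sigT_def using L x cm by blast
qed

lemma sigT_multr:
  assumes ab: "sigT a b" and c: "C c"
  shows "sigT (a\<cdot>c) (b\<cdot>c)"
proof -
  obtain x where x: "C x" "leT a (a\<cdot>x\<cdot>b\<cdot>x\<cdot>a)" "leT b (b\<cdot>x\<cdot>a\<cdot>x\<cdot>b)" using ab sigT_def by blast
  have L: "leT (a\<cdot>c) (a\<cdot>c\<cdot>x\<cdot>(b\<cdot>c)\<cdot>x\<cdot>(a\<cdot>c))"
    if Ca: "C a" and Cb: "C b" and h: "leT a (a\<cdot>x\<cdot>b\<cdot>x\<cdot>a)" for a b
  proof -
    have h': "a \<oplus> a\<cdot>(x\<cdot>b\<cdot>x)\<cdot>a = a\<cdot>(x\<cdot>b\<cdot>x)\<cdot>a" using h unfolding leT_def by (simp add: ma)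
    from K1r[OF Ca cm c h'] have "leT (a\<cdot>c) (a\<cdot>c\<cdot>(x\<cdot>b\<cdot>x)\<cdot>a\<cdot>c)" unfolding leT_def .
    also have "leT (a\<cdot>c\<cdot>(x\<cdot>b\<cdot>x)\<cdot>a\<cdot>c) (a\<cdot>c\<cdot>x\<cdot>(b\<cdot>c)\<cdot>x\<cdot>(a\<cdot>c))"
    proof -
      have "leT (c\<cdot>(x\<cdot>b)\<cdot>(x\<cdot>a)\<cdot>c) (c\<cdot>(x\<cdot>b)\<cdot>c\<cdot>(x\<cdot>a)\<cdot>c)" by (rule reg_le[OF c cm cm])
      then have "leT (a\<cdot>(c\<cdot>(x\<cdot>b)\<cdot>(x\<cdot>a)\<cdot>c)) (a\<cdot>(c\<cdot>(x\<cdot>b)\<cdot>c\<cdot>(x\<cdot>a)\<cdot>c))" by (rule leT_ml)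
      then show ?thesis by (simp add: ma)
    qed
    finally show ?thesis .
  qed
  have "C a" "C b" using ab sigT_def by auto
  then show ?thesis unfolding sigT_def using L x cm by blast
qed

lemma sigT_mult2:
  assumes ab: "sigT a b" and cd: "sigT c d"
  shows "sigT (a\<cdot>c) (b\<cdot>d)"
proof -
  have "C c" "C b" using ab cd sigT_def by auto
  have "sigT (a\<cdot>c) (b\<cdot>c)" by (rule sigT_multr[OF ab \<open>C c\<close>])
  moreover have "sigT (b\<cdot>c) (b\<cdot>d)" by (rule sigT_multl[OF cd \<open>C b\<close>])
  ultimately show ?thesis by (rule sigT_trans)
qed
end

locale IS =
  fixes pl :: "'a \<Rightarrow> 'a \<Rightarrow> 'a" (infixl "\<uplus>" 65) and ml :: "'a \<Rightarrow> 'a \<Rightarrow> 'a" (infixl "\<star>" 70)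
  assumes idem: "idem_semiring pl ml"
begin
lemma spa: "(x \<uplus> y) \<uplus> z = x \<uplus> (y \<uplus> z)" using idem unfolding idem_semiring_def by blast
lemma spi: "x \<uplus> x = x" using idem unfolding idem_semiring_def by blast
lemma sma: "(x \<star> y) \<star> z = x \<star> (y \<star> z)" using idem unfolding idem_semiring_def by blast
lemma smi: "x \<star> x = x" using idem unfolding idem_semiring_def by blast
lemma sdl: "x \<star> (y \<uplus> z) = x \<star> y \<uplus> x \<star> z" using idem unfolding idem_semiring_def by blast
lemma sdr: "(x \<uplus> y) \<star> z = x \<star> z \<uplus> y \<star> z" using idem unfolding idem_semiring_def by blast

definition le where "le p q \<longleftrightarrow> q \<uplus> p \<uplus> q = q"
lemma band1: "s \<uplus> t \<uplus> r \<uplus> t \<uplus> (s \<uplus> t \<uplus> r) = s \<uplus> t \<uplus> r"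
  by (metis spa spi)
lemma le_trans: "le p q \<Longrightarrow> le q r \<Longrightarrow> le p r"
  unfolding le_def
proof -
  assume 1: "q \<uplus> p \<uplus> q = q" and 2: "r \<uplus> q \<uplus> r = r"
  have "r = (r \<uplus> q) \<uplus> p \<uplus> (q \<uplus> r)" using 1 2 by (metis spa)
  then show "r \<uplus> p \<uplus> r = r" using band1 by (metis spa)
qed
lemma le_refl: "le p p" by (simp add: le_def spi)
lemma le_sum1: "le p (p \<uplus> q)" unfolding le_def by (metis spa spi)
lemma le_sum2: "le q (p \<uplus> q)" unfolding le_def by (metis spa spi)
lemma le_join: "le p r \<Longrightarrow> le q r \<Longrightarrow> le (p \<uplus> q) r"
  unfolding le_def by (metis band1 spa)
lemma le_ml: "le p q \<Longrightarrow> le (c \<star> p) (c \<star> q)" unfolding le_def by (metis sdl)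
lemma le_mr: "le p q \<Longrightarrow> le (p \<star> c) (q \<star> c)" unfolding le_def by (metis sdr)

definition D where "D p q \<longleftrightarrow> le p q \<and> le q p"
lemma D_refl: "D p p" by (simp add: D_def le_refl)
lemma D_sym: "D p q \<Longrightarrow> D q p" by (simp add: D_def)
lemma D_trans: "D p q \<Longrightarrow> D q s \<Longrightarrow> D p s" unfolding D_def using le_trans by blast
lemma D_plusr: "D p q \<Longrightarrow> D (p \<uplus> s) (q \<uplus> s)"
  unfolding D_def by (meson le_join le_sum1 le_sum2 le_trans)
lemma D_plusl: "D p q \<Longrightarrow> D (s \<uplus> p) (s \<uplus> q)"
  unfolding D_def by (meson le_join le_sum1 le_sum2 le_trans)
lemma D_multr: "D p q \<Longrightarrow> D (p \<star> s) (q \<star> s)" unfolding D_def by (simp add: le_mr)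
lemma D_multl: "D p q \<Longrightarrow> D (s \<star> p) (s \<star> q)" unfolding D_def by (simp add: le_ml)
lemma D_comm: "D (p \<uplus> q) (q \<uplus> p)" unfolding D_def by (meson le_join le_sum1 le_sum2)

definition r where "r p = (SOME q. D p q)"
lemma r_D: "D p (r p)" unfolding r_def by (rule someI, rule D_refl)
lemma r_eq: "D p q \<Longrightarrow> r p = r q"
proof -
  assume "D p q"
  then have "(\<lambda>s. D p s) = (\<lambda>s. D q s)" using D_sym D_trans by (intro ext iffI) blast+
  then show ?thesis unfolding r_def by simp
qed
lemma r_iff: "r p = r q \<longleftrightarrow> D p q"
  using r_eq r_D D_sym D_trans by metis
lemma rr: "r (r p) = r p" using r_eq[OF D_sym[OF r_D]] .

definition Cr where "Cr x \<longleftrightarrow> r x = x"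
definition tp where "tp x y = r (x \<uplus> y)"
definition tm where "tm x y = r (x \<star> y)"

lemma r_plus: "r (p \<uplus> q) = tp (r p) (r q)"
  unfolding tp_def by (rule r_eq) (meson D_plusl D_plusr D_trans r_D)
lemma r_mult: "r (p \<star> q) = tm (r p) (r q)"
  unfolding tm_def by (rule r_eq) (meson D_multl D_multr D_trans r_D)

sublocale T: Tq Cr tp tm
proof
  fix x y z
  show "tp (tp x y) z = tp x (tp y z)"
    by (metis r_plus rr spa tp_def)
  show "tp x y = tp y x" unfolding tp_def by (rule r_eq, rule D_comm)
  show "tm (tm x y) z = tm x (tm y z)"
    by (metis r_mult rr sma tm_def)
  show "tm x (tp y z) = tp (tm x y) (tm x z)"
    by (metis r_mult r_plus rr sdl tm_def tp_def)
  show "tm (tp x y) z = tp (tm x z) (tm y z)"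
    by (metis r_mult r_plus rr sdr tm_def tp_def)
  show "Cr (tp x y)" unfolding Cr_def tp_def by (rule rr)
  show "Cr (tm x y)" unfolding Cr_def tm_def by (rule rr)
  assume "Cr x"
  then show "tp x x = x" "tm x x = x" unfolding Cr_def tp_def tm_def by (simp_all add: spi smi)
qed

lemma Cr_r: "Cr (r p)" unfolding Cr_def by (rule rr)

lemma le_iff: "le p q \<longleftrightarrow> T.leT (r p) (r q)"
proof -
  have "T.leT (r p) (r q) \<longleftrightarrow> r (p \<uplus> q) = r q" unfolding T.leT_def r_plus ..
  also have "\<dots> \<longleftrightarrow> D (p \<uplus> q) q" by (rule r_iff)
  also have "\<dots> \<longleftrightarrow> le p q" unfolding D_def le_def by (metis spa spi)
  finally show ?thesis ..
qed

lemma r_word: "r (a \<star> x \<star> b \<star> x \<star> a) = tm (tm (tm (tm (r a) (r x)) (r b)) (r x)) (r a)"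
  by (simp add: r_mult)

lemma sigma_iff: "(a, b) \<in> sigma_star pl ml \<longleftrightarrow> T.sigT (r a) (r b)"
proof -
  have 1: "(let u = a \<star> x \<star> b \<star> x \<star> a in u = u \<uplus> a \<uplus> u) \<longleftrightarrow> le a (a \<star> x \<star> b \<star> x \<star> a)" for a b x
    by (simp add: le_def Let_def eq_commute)
  have "(a, b) \<in> sigma_star pl ml \<longleftrightarrow> (\<exists>x. le a (a \<star> x \<star> b \<star> x \<star> a) \<and> le b (b \<star> x \<star> a \<star> x \<star> b))"
    unfolding sigma_star_def using 1 by simp
  also have "\<dots> \<longleftrightarrow> (\<exists>x. T.leT (r a) (tm (tm (tm (tm (r a) (r x)) (r b)) (r x)) (r a)) \<and>
                         T.leT (r b) (tm (tm (tm (tm (r b) (r x)) (r a)) (r x)) (r b)))"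
    by (simp add: le_iff r_word)
  also have "\<dots> \<longleftrightarrow> T.sigT (r a) (r b)"
  proof
    assume "\<exists>x. T.leT (r a) (tm (tm (tm (tm (r a) (r x)) (r b)) (r x)) (r a)) \<and>
                         T.leT (r b) (tm (tm (tm (tm (r b) (r x)) (r a)) (r x)) (r b))"
    then show "T.sigT (r a) (r b)" unfolding T.sigT_def using Cr_r by blast
  next
    assume "T.sigT (r a) (r b)"
    then obtain X where "Cr X" "T.leT (r a) (tm (tm (tm (tm (r a) X) (r b)) X) (r a))"
      "T.leT (r b) (tm (tm (tm (tm (r b) X) (r a)) X) (r b))" unfolding T.sigT_def by blast
    then show "\<exists>x. T.leT (r a) (tm (tm (tm (tm (r a) (r x)) (r b)) (r x)) (r a)) \<and>
                         T.leT (r b) (tm (tm (tm (tm (r b) (r x)) (r a)) (r x)) (r b))"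
      unfolding Cr_def by metis
  qed
  finally show ?thesis .
qed

lemma sigma_dl: "dl_congruence pl ml (sigma_star pl ml)"
proof -
  let ?s = "sigma_star pl ml"
  have refl: "(a, a) \<in> ?s" for a unfolding sigma_iff by (rule T.sigT_refl[OF Cr_r])
  have sym: "(a, b) \<in> ?s \<Longrightarrow> (b, a) \<in> ?s" for a b unfolding sigma_iff by (rule T.sigT_sym)
  have trans: "(a, b) \<in> ?s \<Longrightarrow> (b, c) \<in> ?s \<Longrightarrow> (a, c) \<in> ?s" for a b c
    unfolding sigma_iff by (rule T.sigT_trans)
  have eq: "equiv UNIV ?s"
    by (rule equivI) (auto simp: refl_on_def sym_def trans_def intro: refl sym trans)
  have comp: "(a \<uplus> c, b \<uplus> d) \<in> ?s \<and> (a \<star> c, b \<star> d) \<in> ?s" if "(a, b) \<in> ?s" "(c, d) \<in> ?s" for a b c d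
    using that unfolding sigma_iff r_plus r_mult by (blast intro: T.sigT_plus2 T.sigT_mult2)
  have i1: "(x \<uplus> y, y \<uplus> x) \<in> ?s" for x y unfolding sigma_iff r_plus by (rule T.sigT_comm_plus)
  have i2: "(x \<star> y, y \<star> x) \<in> ?s" for x y unfolding sigma_iff r_mult by (rule T.sigT_comm_mult[OF Cr_r Cr_r])
  have i3: "(x \<uplus> x \<star> y, x) \<in> ?s" for x y unfolding sigma_iff r_plus r_mult by (rule T.sigT_absorb[OF Cr_r Cr_r])
  show ?thesis unfolding dl_congruence_def semiring_congruence_def using eq comp i1 i2 i3 by blast
qed

lemma sigma_least:
  assumes rho: "dl_congruence pl ml \<rho>" and ab: "(a, b) \<in> sigma_star pl ml"
  shows "(a, b) \<in> \<rho>"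
proof -
  have eqv: "equiv UNIV \<rho>" and cg: "\<And>a b c d. (a, b) \<in> \<rho> \<Longrightarrow> (c, d) \<in> \<rho> \<Longrightarrow> (a \<uplus> c, b \<uplus> d) \<in> \<rho> \<and> (a \<star> c, b \<star> d) \<in> \<rho>"
    and cp: "\<And>x y. (x \<uplus> y, y \<uplus> x) \<in> \<rho>" and cm: "\<And>x y. (x \<star> y, y \<star> x) \<in> \<rho>"
    and ab_: "\<And>x y. (x \<uplus> x \<star> y, x) \<in> \<rho>"
    using rho unfolding dl_congruence_def semiring_congruence_def by blast+
  have rf: "(p, p) \<in> \<rho>" for p using eqv unfolding equiv_def refl_on_def by blast
  have sy: "(p, q) \<in> \<rho> \<Longrightarrow> (q, p) \<in> \<rho>" for p q using eqv unfolding equiv_def sym_def by blast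
  have tr: "(p, q) \<in> \<rho> \<Longrightarrow> (q, s) \<in> \<rho> \<Longrightarrow> (p, s) \<in> \<rho>" for p q s
    using eqv unfolding equiv_def trans_def by blast
  note [trans] = tr
  have ml: "(p, q) \<in> \<rho> \<Longrightarrow> (s \<star> p, s \<star> q) \<in> \<rho>" for p q s using cg rf by blast
  have mr: "(p, q) \<in> \<rho> \<Longrightarrow> (p \<star> s, q \<star> s) \<in> \<rho>" for p q s using cg rf by blast
  obtain x where x1: "le a (a \<star> x \<star> b \<star> x \<star> a)" and x2: "le b (b \<star> x \<star> a \<star> x \<star> b)"
    using ab unfolding sigma_star_def le_def Let_def by (auto simp: eq_commute)
  have key: "(a \<star> x \<star> b \<star> x \<star> a, a) \<in> \<rho>" if h: "le a (a \<star> x \<star> b \<star> x \<star> a)" for a b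
  proof -
    let ?u = "a \<star> x \<star> b \<star> x \<star> a"
    have "?u = ?u \<uplus> a \<uplus> ?u" using h unfolding le_def by simp
    also have "(?u \<uplus> a \<uplus> ?u, ?u \<uplus> (?u \<uplus> a)) \<in> \<rho>" by (rule cp)
    also have "?u \<uplus> (?u \<uplus> a) = ?u \<uplus> a" by (simp add: spa[symmetric] spi)
    also have "(?u \<uplus> a, a \<uplus> ?u) \<in> \<rho>" by (rule cp)
    also have "a \<uplus> ?u = a \<uplus> a \<star> (x \<star> b \<star> x \<star> a)" by (simp add: sma)
    also have "(a \<uplus> a \<star> (x \<star> b \<star> x \<star> a), a) \<in> \<rho>" by (rule ab_)
    finally show ?thesis .
  qed
  have norm: "(a \<star> x \<star> b \<star> x \<star> a, x \<star> a \<star> b) \<in> \<rho>" for a b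
  proof -
    have "a \<star> x \<star> b \<star> x \<star> a = (a \<star> x \<star> b) \<star> (x \<star> a)" by (simp add: sma)
    also have "((a \<star> x \<star> b) \<star> (x \<star> a), (x \<star> a) \<star> (a \<star> x \<star> b)) \<in> \<rho>" by (rule cm)
    also have "(x \<star> a) \<star> (a \<star> x \<star> b) = x \<star> (a \<star> x) \<star> b" by (metis sma smi)
    also have "(x \<star> (a \<star> x) \<star> b, x \<star> (x \<star> a) \<star> b) \<in> \<rho>" by (rule mr, rule ml, rule cm)
    also have "x \<star> (x \<star> a) \<star> b = x \<star> a \<star> b" by (metis sma smi)
    finally show ?thesis .
  qed
  have "(a, a \<star> x \<star> b \<star> x \<star> a) \<in> \<rho>" by (rule sy, rule key[OF x1])
  also have "(a \<star> x \<star> b \<star> x \<star> a, x \<star> a \<star> b) \<in> \<rho>" by (rule norm)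
  also have "x \<star> a \<star> b = x \<star> (a \<star> b)" by (simp add: sma)
  also have "(x \<star> (a \<star> b), x \<star> (b \<star> a)) \<in> \<rho>" by (rule ml, rule cm)
  also have "x \<star> (b \<star> a) = x \<star> b \<star> a" by (simp add: sma)
  also have "(x \<star> b \<star> a, b \<star> x \<star> a \<star> x \<star> b) \<in> \<rho>" by (rule sy, rule norm)
  also have "(b \<star> x \<star> a \<star> x \<star> b, b) \<in> \<rho>" by (rule key[OF x2])
  finally show ?thesis .
qed
end

theorem theorem2p3:
  fixes pl ml :: "'a \<Rightarrow> 'a \<Rightarrow> 'a"
  assumes "idem_semiring pl ml"
  shows "dl_congruence pl ml (sigma_star pl ml) \<and>
         (\<forall>\<rho>. dl_congruence pl ml \<rho> \<longrightarrow> sigma_star pl ml \<subseteq> \<rho>)"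
proof -
  interpret IS pl ml by (rule IS.intro, rule assms)
  show ?thesis using sigma_dl sigma_least by auto
qed

end
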